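(* Let $a$ and $b$ be coprime odd integers, let $\beta\geq 0$ be an integer, and let $\gamma$ be a positive integer such that $2^\gamma\,\|\,(a+b)$. Then: 1) If $\gamma<\beta$, then $G_{(a,b)}(\beta)=\emptyset$. 2) If $2\leq\beta\leq\gamma$, then $G_{(a,b)}(\gamma)=\{d\in\mathbb{N} : d=1 \text{ or } d \text{ is odd and } 2\,\|\,\operatorname{ord}_p(\tfrac{a}{b}) \text{ for every prime } p \text{ dividing } d\}$, and for $2\leq\beta<\gamma$, $G_{(a,b)}(\beta)=\bigcup_{i=0}^{\gamma-\beta}\{d2^i : d\in G_{(a,b)}(\gamma)\}=G_{(a,b)}(\beta+1)\cup\{d2^{\gamma-\beta} : d\in G_{(a,b)}(\gamma)\}$. 3) If $\beta\in\{0,1\}$, then $G_{(a,b)}(1)=\{2d : d\in G_{(a,b)}(2)\}\cup\{d\in\mathbb{N} : d=1 \text{ or } d \text{ is odd and there exists } s\geq1 \text{ such that } 2^s\,\|\,\operatorname{ord}_p(\tfrac{a}{b}) \text{ for every prime } p \text{ dividing } d\}$ and $G_{(a,b)}(0)=G_{(a,b)}(1)\cup\{2d : d\in G_{(a,b)}(1)\}$.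
   Context: For coprime nonzero integers $a,b$ and an integer $\beta\geq0$, $G_{(a,b)}(\beta)$ is the set of positive integers $d$ such that $2^\beta d\mid(a^k+b^k)$ for some positive integer $k$. For $n$ coprime to $ab$, $\operatorname{ord}_n(\frac{a}{b})$ denotes the multiplicative order of $ab^{-1}$ modulo $n$ (conditions on $\operatorname{ord}_p(\frac ab)$ presuppose that it is defined). $2^\gamma\,\|\,m$ means $2^\gamma\mid m$ and $2^{\gamma+1}\nmid m$. *)

theory Defs
  imports "HOL-Number_Theory.Number_Theory"
begin

definition G :: "int \<Rightarrow> int \<Rightarrow> nat \<Rightarrow> nat set" where
  "G a b \<beta> = {d::nat. d > 0 \<and> (\<exists>k::nat. k > 0 \<and> int (2 ^ \<beta> * d) dvd a ^ k + b ^ k)}"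

text \<open>Multiplicative order of a * b^(-1) modulo n, i.e. the least k > 0 with a^k = b^k (mod n);
  defined only for n coprime to a*b (value 0 otherwise; all uses below require coprimality).\<close>
definition ord_ratio :: "nat \<Rightarrow> int \<Rightarrow> int \<Rightarrow> nat" where
  "ord_ratio n a b = (if coprime (int n) (a * b)
     then (LEAST k::nat. k > 0 \<and> [a ^ k = b ^ k] (mod int n)) else 0)"

definition exact_pow2 :: "nat \<Rightarrow> 'a::comm_semiring_1 \<Rightarrow> bool" where
  "exact_pow2 g m \<longleftrightarrow> 2 ^ g dvd m \<and> \<not> 2 ^ (g + 1) dvd m"

end

theory Submission
  imports Defs
begin


lemma odd_decomp:
  assumes "(d::nat) > 0" shows "\<exists>i d'. d = 2^i * d' \<and> odd d'"
proof -
  obtain y where "d = 2 ^ multiplicity 2 d * y" "\<not> 2 dvd y"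
    using multiplicity_decompose'[of d 2] assms by auto
  thus ?thesis by blast
qed

lemma sum_pow_odd:
  fixes x y :: int assumes "odd n"
  shows "x ^ n + y ^ n = (x + y) * (\<Sum>i<n. (-y)^(n - Suc i) * x^i)"
proof -
  have "x^n - (-y)^n = (x - (-y)) * (\<Sum>i<n. (-y)^(n - Suc i) * x^i)"
    by (rule power_diff_sumr2)
  moreover have "(-y)^n = - (y^n)" using assms by (simp add: power_minus_odd)
  ultimately show ?thesis by simp
qed

lemma dvd_sum_pow_odd:
  fixes x y :: int assumes "odd n" shows "x + y dvd x ^ n + y ^ n"
  using sum_pow_odd[OF assms] by simp

lemma odd_cofactor:
  fixes x y :: int assumes "odd n" "odd x" "odd y"
  shows "odd (\<Sum>i<n. (-y)^(n - Suc i) * x^i)"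
proof -
  have "[(\<Sum>i<n. (-y)^(n - Suc i) * x^i) = (\<Sum>i<n. 1)] (mod 2)"
    by (rule cong_sum) (use assms in \<open>auto simp: cong_def odd_iff_mod_2_eq_one[symmetric]\<close>)
  hence "[(\<Sum>i<n. (-y)^(n - Suc i) * x^i) = int n] (mod 2)" by simp
  thus ?thesis using assms(1) by (metis cong_dvd_iff even_of_nat dvd_refl)
qed

lemma exact_pow2_mul_odd:
  fixes X S :: int assumes "exact_pow2 g X" "odd S" shows "exact_pow2 g (X * S)"
proof -
  have "coprime (2^(g+1)) S" using assms(2) by simp
  thus ?thesis using assms(1) unfolding exact_pow2_def
    by (metis coprime_dvd_mult_left_iff dvd_mult2)
qed

lemma exact_dvd_iff:
  fixes X :: int and d :: nat assumes "exact_pow2 g X" "odd d"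
  shows "2^m * int d dvd X \<longleftrightarrow> m \<le> g \<and> int d dvd X"
proof
  assume h: "2^m * int d dvd X"
  hence "2^m dvd X" using dvd_mult_left by blast
  hence "m \<le> g"
  proof (rule contrapos_pp)
    assume "\<not> m \<le> g" hence "g+1 \<le> m" by simp
    hence "(2::int)^(g+1) dvd 2^m" by (rule le_imp_power_dvd)
    thus "\<not> 2^m dvd X" using assms(1) unfolding exact_pow2_def using dvd_trans by blast
  qed
  thus "m \<le> g \<and> int d dvd X" using h dvd_mult_right by blast
next
  assume h: "m \<le> g \<and> int d dvd X"
  hence "2^m dvd X" using assms(1) unfolding exact_pow2_def
    by (meson dvd_trans le_imp_power_dvd)
  moreover have "coprime ((2::int)^m) (int d)" using assms(2) by simp
  ultimately show "2^m * int d dvd X" using h by (simp add: divides_mult)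
qed

lemma sq_odd_mod4: "odd (x::int) \<Longrightarrow> [x^2 = 1] (mod 4)"
proof -
  assume "odd x" then obtain t where "x = 2*t+1" by (metis oddE)
  hence "x^2 = 4*(t^2+t) + 1" by (simp add: power2_eq_square algebra_simps)
  thus ?thesis by (simp add: cong_iff_dvd_diff)
qed

lemma even_pow_mod4:
  assumes "odd (x::int)" "even k" shows "[x^k = 1] (mod 4)"
proof -
  obtain j where "k = 2*j" using assms(2) by blast
  hence "x^k = (x^2)^j" by (simp add: power_mult)
  moreover have "[(x^2)^j = 1^j] (mod 4)" by (rule cong_pow[OF sq_odd_mod4[OF assms(1)]])
  ultimately show ?thesis by simp
qed

lemma even_exact1:
  assumes "odd (a::int)" "odd b" "even k" shows "exact_pow2 1 (a^k + b^k)"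
proof -
  have "[a^k + b^k = 1 + 1] (mod 4)"
    by (rule cong_add[OF even_pow_mod4[OF assms(1,3)] even_pow_mod4[OF assms(2,3)]])
  hence "(a^k + b^k) mod 4 = 2" by (simp add: cong_def)
  hence "2 dvd a^k + b^k" "\<not> 4 dvd a^k + b^k"
    by (metis dvd_mod_iff dvd_refl mod_mod_cancel numeral_Bit0 even_numeral one_add_one
      mult_2_right dvd_triv_left, presburger)
  thus ?thesis unfolding exact_pow2_def by simp
qed



lemma fermat_int:
  fixes p :: nat and a :: int
  assumes "prime p" "\<not> int p dvd a" shows "[a^(p-1) = 1] (mod int p)"
proof -
  define x where "x = nat (a mod int p)"
  have p0: "int p > 0" using assms(1) prime_gt_0_nat by simp
  have xa: "int x = a mod int p" using p0 by (simp add: x_def)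
  hence c1: "[int x = a] (mod int p)" by (simp add: cong_def)
  have "\<not> p dvd x"
  proof
    assume "p dvd x" hence "int p dvd int x" by simp
    hence "int p dvd a mod int p" using xa by simp
    thus False using assms(2) by (simp add: dvd_mod_iff)
  qed
  hence "[x^(p-1) = 1] (mod p)" by (rule fermat_theorem[OF assms(1)])
  hence "[int x^(p-1) = 1] (mod int p)" by (metis cong_int_iff of_nat_1 of_nat_power)
  moreover have "[a^(p-1) = int x^(p-1)] (mod int p)" using cong_pow[OF c1] by (simp add: cong_sym)
  ultimately show ?thesis using cong_trans by blast
qed

lemma ord_props:
  fixes p :: nat and a b :: int
  assumes "prime p" "coprime (int p) (a * b)"
  shows "ord_ratio p a b > 0" "[a^k = b^k] (mod int p) \<longleftrightarrow> ord_ratio p a b dvd k"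
proof -
  have ca: "coprime (int p) a" and cb: "coprime (int p) b" using assms(2) by auto
  have nu: "\<not> is_unit (int p)" using assms(1) prime_gt_1_nat[OF assms(1)] by simp
  have pa: "\<not> int p dvd a" using ca nu coprime_common_divisor dvd_refl by blast
  have pb: "\<not> int p dvd b" using cb nu coprime_common_divisor dvd_refl by blast
  define P where "P = (\<lambda>k::nat. k > 0 \<and> [a ^ k = b ^ k] (mod int p))"
  have o: "ord_ratio p a b = (LEAST k. P k)" using assms(2) by (simp add: ord_ratio_def P_def)
  have "P (p-1)"
    using fermat_int[OF assms(1) pa] fermat_int[OF assms(1) pb] prime_gt_1_nat[OF assms(1)]
    by (auto simp: P_def intro: cong_trans cong_sym)
  hence Pn: "P (ord_ratio p a b)" unfolding o by (rule LeastI)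
  have minl: "\<And>k. P k \<Longrightarrow> ord_ratio p a b \<le> k" unfolding o by (rule Least_le)
  show "ord_ratio p a b > 0" using Pn by (simp add: P_def)
  define n where "n = ord_ratio p a b"
  have n0: "n > 0" and cn: "[a^n = b^n] (mod int p)" using Pn by (auto simp: P_def n_def)
  have pw: "[a^(n*q) = b^(n*q)] (mod int p)" for q
    by (simp add: power_mult cong_pow[OF cn])
  show "[a^k = b^k] (mod int p) \<longleftrightarrow> ord_ratio p a b dvd k"
  proof
    assume h: "[a^k = b^k] (mod int p)"
    define q r where "q = k div n" and "r = k mod n"
    have k: "k = n*q + r" by (simp add: q_def r_def)
    have "[a^(n*q) * a^r = b^(n*q) * b^r] (mod int p)" using h by (simp add: k power_add)
    moreover have "[a^(n*q) * a^r = b^(n*q) * a^r] (mod int p)" by (rule cong_mult[OF pw cong_refl])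
    ultimately have "[b^(n*q) * a^r = b^(n*q) * b^r] (mod int p)" by (meson cong_sym cong_trans)
    moreover have "coprime (b^(n*q)) (int p)" using cb by (simp add: coprime_commute)
    ultimately have cr: "[a^r = b^r] (mod int p)" by (simp add: cong_mult_lcancel)
    have "r < n" using n0 by (simp add: r_def)
    hence "r = 0" using minl[of r] cr unfolding P_def n_def by (metis not_le gr0I)
    thus "ord_ratio p a b dvd k" using k n_def by simp
  next
    assume "ord_ratio p a b dvd k"
    then obtain q where "k = n*q" by (auto simp: n_def)
    thus "[a^k = b^k] (mod int p)" using pw by simp
  qed
qed



lemma lift_step:
  fixes x y :: int and p :: nat
  assumes "prime p" "odd p" "j \<ge> 1" "int p ^ j dvd x + y"
  shows "int p ^ (j+1) dvd x ^ p + y ^ p"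
proof -
  define S where "S = (\<Sum>i<p. (-y)^(p - Suc i) * x^i)"
  have eq: "x^p + y^p = (x+y) * S" unfolding S_def by (rule sum_pow_odd[OF assms(2)])
  have "int p dvd x + y" using assms(3,4) dvd_trans[OF dvd_power[of j "int p"]] by simp
  hence xy: "[-y = x] (mod int p)" unfolding cong_iff_dvd_diff
    by (metis dvd_minus_iff minus_diff_eq diff_minus_eq_add add.commute)
  have "[S = (\<Sum>i<p. x^(p-1))] (mod int p)" unfolding S_def
  proof (rule cong_sum)
    fix i assume "i \<in> {..<p}"
    hence "x^(p - Suc i) * x^i = x^(p-1)" by (simp add: power_add[symmetric])
    moreover have "[(-y)^(p - Suc i) * x^i = x^(p - Suc i) * x^i] (mod int p)"
      by (rule cong_mult[OF cong_pow[OF xy] cong_refl])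
    ultimately show "[(-y)^(p - Suc i) * x^i = x^(p-1)] (mod int p)" by simp
  qed
  hence "[S = int p * x^(p-1)] (mod int p)" by simp
  hence "int p dvd S" by (simp add: cong_dvd_iff)
  hence "int p ^ j * int p dvd (x+y) * S" using assms(4) by (rule mult_dvd_mono[rotated])
  thus ?thesis using eq by (simp add: mult.commute)
qed

lemma lift_iter:
  fixes p :: nat and a b :: int
  assumes "prime p" "odd p" "int p dvd a^h + b^h"
  shows "int p ^ (e+1) dvd a^(h*p^e) + b^(h*p^e)"
proof (induction e)
  case 0 thus ?case using assms by simp
next
  case (Suc e)
  have "int p ^ (e+1+1) dvd (a^(h*p^e))^p + (b^(h*p^e))^p"
    by (rule lift_step[OF assms(1,2) _ Suc]) simp
  moreover have "h * p ^ Suc e = h * p^e * p" by simp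
  ultimately show ?case by (simp only: power_mult[symmetric]) simp
qed

lemma exact_from_ord:
  fixes n q :: nat
  assumes "n dvd 2^s * q" "\<not> n dvd 2^(s-1) * q" "odd q" "s \<ge> 1"
  shows "exact_pow2 s n"
proof -
  obtain c where c: "2^s * q = n * c" using assms(1) by blast
  have s: "(2::nat)^s = 2 * 2^(s-1)" using assms(4) by (simp add: power_eq_if)
  have "odd c"
  proof
    assume "even c" then obtain c' where "c = 2*c'" by blast
    hence "2^(s-1) * q = n * c'" using c s by simp
    thus False using assms(2) by auto
  qed
  have "2^s dvd n * c" using c by (metis dvd_triv_left)
  moreover have "coprime ((2::nat)^s) c" using \<open>odd c\<close> by simp
  ultimately have d1: "2^s dvd n" using coprime_dvd_mult_left_iff by blast
  have "\<not> 2^(s+1) dvd n"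
  proof
    assume "2^(s+1) dvd n" hence "2^(s+1) dvd 2^s * q" using c by (metis dvd_mult2)
    hence "2 dvd q" by simp
    thus False using assms(3) by simp
  qed
  thus ?thesis using d1 by (simp add: exact_pow2_def)
qed



lemma prime_dir:
  fixes a b :: int and d p q s :: nat
  assumes ab: "coprime a b" and "odd d" and dv: "int d dvd a^(2^(s-1)*q) + b^(2^(s-1)*q)"
    and "odd q" "s \<ge> 1" and p: "prime p" "p dvd d"
  shows "coprime (int p) (a*b) \<and> exact_pow2 s (ord_ratio p a b)"
proof -
  define k where "k = 2^(s-1)*q"
  have k0: "k > 0" using assms(4) k_def by (simp add: odd_pos)
  have pp: "prime (int p)" using p by simp
  have po: "odd p" using assms(2) p(2) using dvd_trans by blast
  have pk: "int p dvd a^k + b^k" using dv p(2) k_def by (meson dvd_trans int_dvd_int_iff)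
  have ca: "coprime (int p) a"
  proof (rule ccontr)
    assume "\<not> coprime (int p) a"
    hence "int p dvd a" using prime_imp_coprime[OF pp] by blast
    hence "int p dvd a^k" using k0 by (meson dvd_power dvd_trans)
    hence "int p dvd b^k" using pk by (simp add: dvd_add_right_iff)
    hence "int p dvd b" using pp prime_dvd_power by blast
    hence "is_unit (int p)" using coprime_common_divisor[OF ab] \<open>int p dvd a\<close> \<open>int p dvd b\<close> by blast
    thus False using pp not_prime_unit by blast
  qed
  have cb: "coprime (int p) b"
  proof (rule ccontr)
    assume "\<not> coprime (int p) b"
    hence "int p dvd b" using prime_imp_coprime[OF pp] by blast
    hence "int p dvd b^k" using k0 by (meson dvd_power dvd_trans)
    hence "int p dvd a^k" using pk by (simp add: dvd_add_left_iff)
    hence "int p dvd a" using pp prime_dvd_power by blast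
    hence "is_unit (int p)" using coprime_common_divisor[OF ab] \<open>int p dvd a\<close> \<open>int p dvd b\<close> by blast
    thus False using pp not_prime_unit by blast
  qed
  have cab: "coprime (int p) (a*b)" using ca cb by simp
  note op = ord_props[OF p(1) cab]
  have c1: "[a^k = - (b^k)] (mod int p)" using pk by (simp add: cong_iff_dvd_diff)
  have "[(a^k)^2 = (- (b^k))^2] (mod int p)" by (rule cong_pow[OF c1])
  hence "[a^(2*k) = b^(2*k)] (mod int p)" by (simp add: power_mult[symmetric] mult.commute)
  moreover have "2*k = 2^s * q" using assms(5) k_def by (cases s) auto
  ultimately have d2: "ord_ratio p a b dvd 2^s * q"
    using op(2) by metis
  have nd: "\<not> ord_ratio p a b dvd k"
  proof
    assume "ord_ratio p a b dvd k"
    hence "[a^k = b^k] (mod int p)" using op(2) by blast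
    hence "[b^k = - (b^k)] (mod int p)" using c1 by (meson cong_sym cong_trans)
    hence "int p dvd 2 * b^k" by (simp add: cong_iff_dvd_diff)
    hence "int p dvd 2 \<or> int p dvd b^k" using pp prime_dvd_mult_iff by blast
    moreover have "\<not> int p dvd 2"
    proof
      assume "int p dvd 2" hence "p dvd 2" using int_dvd_int_iff[of p 2] by simp
      hence "p \<le> 2" by (rule dvd_imp_le) simp
      hence "p = 2" using prime_gt_1_nat[OF p(1)] by simp
      thus False using po by simp
    qed
    moreover have "\<not> int p dvd b^k"
    proof
      assume "int p dvd b^k" hence "int p dvd b" using pp prime_dvd_power by blast
      thus False using coprime_common_divisor[OF cb dvd_refl] pp not_prime_unit by blast
    qed
    ultimately show False by blast
  qed
  show ?thesis using cab exact_from_ord[OF d2 _ assms(4,5)] nd k_def by blast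
qed



lemma prime_pow_conv:
  fixes a b :: int and p s e :: nat
  assumes p: "prime p" "odd p" and cab: "coprime (int p) (a*b)"
    and ex: "exact_pow2 s (ord_ratio p a b)" and s: "s \<ge> 1"
  shows "\<exists>q. odd q \<and> int p ^ e dvd a^(2^(s-1)*q) + b^(2^(s-1)*q)"
proof -
  note op = ord_props[OF p(1) cab]
  define n where "n = ord_ratio p a b"
  obtain m where nm: "n = 2^s * m" using ex unfolding exact_pow2_def n_def by blast
  have "odd m"
  proof
    assume "even m" then obtain m' where "m = 2*m'" by blast
    hence "n = 2^(s+1) * m'" using nm by simp
    thus False using ex unfolding exact_pow2_def n_def by simp
  qed
  define h where "h = 2^(s-1)*m"
  have nh: "n = 2*h" using s nm h_def by (cases s) auto
  have h0: "h > 0" using op(1) nh n_def by simp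
  have cn: "[a^n = b^n] (mod int p)" using op(2)[of n] n_def by simp
  have nch: "\<not> [a^h = b^h] (mod int p)"
  proof
    assume "[a^h = b^h] (mod int p)"
    hence "n dvd h" using op(2) n_def by simp
    hence "n \<le> h" using h0 by (simp add: dvd_imp_le)
    thus False using nh h0 by simp
  qed
  have "a^n - b^n = (a^h - b^h) * (a^h + b^h)"
    by (simp add: nh power_mult algebra_simps power2_eq_square)
  moreover have "int p dvd a^n - b^n" using cn by (simp add: cong_iff_dvd_diff dvd_diff_commute)
  ultimately have "int p dvd (a^h - b^h) * (a^h + b^h)" by simp
  moreover have "\<not> int p dvd a^h - b^h" using nch by (simp add: cong_iff_dvd_diff)
  moreover have "prime (int p)" using p by simp
  ultimately have "int p dvd a^h + b^h" using prime_dvd_mult_iff by blast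
  hence "int p ^ (e+1) dvd a^(h*p^e) + b^(h*p^e)" by (rule lift_iter[OF p])
  hence "int p ^ e dvd a^(h*p^e) + b^(h*p^e)" by (rule dvd_trans[rotated]) (simp add: le_imp_power_dvd)
  moreover have "h*p^e = 2^(s-1) * (m*p^e)" by (simp add: h_def)
  moreover have "odd (m*p^e)" using \<open>odd m\<close> p(2) by simp
  ultimately show ?thesis by metis
qed

lemma combine:
  fixes a b :: int and d1 d2 q1 q2 t :: nat
  assumes "int d1 dvd a^(2^t*q1) + b^(2^t*q1)" "int d2 dvd a^(2^t*q2) + b^(2^t*q2)"
    "coprime d1 d2" "odd q1" "odd q2"
  shows "int (d1*d2) dvd a^(2^t*(q1*q2)) + b^(2^t*(q1*q2))"
proof -
  have "a^(2^t*q1) + b^(2^t*q1) dvd (a^(2^t*q1))^q2 + (b^(2^t*q1))^q2"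
    by (rule dvd_sum_pow_odd[OF assms(5)])
  hence 1: "int d1 dvd a^(2^t*(q1*q2)) + b^(2^t*(q1*q2))"
    using assms(1) by (simp add: power_mult[symmetric] mult.assoc dvd_trans)
  have "a^(2^t*q2) + b^(2^t*q2) dvd (a^(2^t*q2))^q1 + (b^(2^t*q2))^q1"
    by (rule dvd_sum_pow_odd[OF assms(4)])
  hence 2: "int d2 dvd a^(2^t*(q1*q2)) + b^(2^t*(q1*q2))"
    using assms(2) by (simp add: power_mult[symmetric] mult.assoc mult.commute[of q1] dvd_trans)
  have "coprime (int d1) (int d2)" using assms(3) by simp
  thus ?thesis using 1 2 by (simp add: divides_mult)
qed

lemma conv_all:
  fixes a b :: int and s d :: nat
  assumes "s \<ge> 1"
  shows "d > 0 \<Longrightarrow> odd d \<Longrightarrow> (\<forall>p. prime p \<and> p dvd d \<longrightarrow> coprime (int p) (a*b) \<and> exact_pow2 s (ord_ratio p a b))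
    \<Longrightarrow> \<exists>q. odd q \<and> int d dvd a^(2^(s-1)*q) + b^(2^(s-1)*q)"
proof (induction d rule: less_induct)
  case (less d)
  show ?case
  proof (cases "d = 1")
    case True thus ?thesis by (intro exI[of _ 1]) simp
  next
    case False
    then obtain p where pp: "prime p" "p dvd d" using prime_factor_nat by blast
    have po: "odd p" using less.prems(2) pp(2) dvd_trans by blast
    obtain y where dy: "d = p ^ multiplicity p d * y" "\<not> p dvd y"
    proof -
      have "p \<noteq> 1" using pp(1) by auto
      thus ?thesis using multiplicity_decompose'[of d p] less.prems(1) that by auto
    qed
    define e where "e = multiplicity p d"
    have yd: "y dvd d" using dy(1) by (metis dvd_triv_right)
    have y0: "y > 0" using less.prems(1) dy by (metis gr0I mult_0_right)
    have "y \<noteq> d" using dy(2) pp(2) by auto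
    hence yl: "y < d" using yd less.prems(1) dvd_imp_le by fastforce
    have yo: "odd y" using yd less.prems(2) dvd_trans by blast
    have "\<forall>p. prime p \<and> p dvd y \<longrightarrow> coprime (int p) (a*b) \<and> exact_pow2 s (ord_ratio p a b)"
      using less.prems(3) yd dvd_trans by blast
    then obtain q2 where q2: "odd q2" "int y dvd a^(2^(s-1)*q2) + b^(2^(s-1)*q2)"
      using less.IH[OF yl y0 yo] by blast
    obtain q1 where q1: "odd q1" "int p ^ e dvd a^(2^(s-1)*q1) + b^(2^(s-1)*q1)"
      using prime_pow_conv[OF pp(1) po _ _ assms, of a b e] less.prems(3) pp by blast
    have "coprime p y" using pp(1) dy(2) by (simp add: prime_imp_coprime)
    hence "coprime (p^e) y" by simp
    hence "int (p^e * y) dvd a^(2^(s-1)*(q1*q2)) + b^(2^(s-1)*(q1*q2))"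
      using combine[of "p^e" a "s-1" q1 b y q2] q1 q2 by simp
    moreover have "odd (q1*q2)" using q1 q2 by simp
    ultimately show ?thesis using dy(1) e_def by metis
  qed
qed



lemma CH:
  fixes a b :: int and d s :: nat
  assumes "coprime a b" "odd d" "d > 0" "s \<ge> 1"
  shows "(\<exists>q. odd q \<and> int d dvd a^(2^(s-1)*q) + b^(2^(s-1)*q)) \<longleftrightarrow>
     (\<forall>p. prime p \<and> p dvd d \<longrightarrow> coprime (int p) (a*b) \<and> exact_pow2 s (ord_ratio p a b))"
proof
  assume "\<exists>q. odd q \<and> int d dvd a^(2^(s-1)*q) + b^(2^(s-1)*q)"
  then obtain q where "odd q" "int d dvd a^(2^(s-1)*q) + b^(2^(s-1)*q)" by blast
  thus "\<forall>p. prime p \<and> p dvd d \<longrightarrow> coprime (int p) (a*b) \<and> exact_pow2 s (ord_ratio p a b)"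
    using prime_dir[OF assms(1,2)] assms(4) by blast
next
  assume "\<forall>p. prime p \<and> p dvd d \<longrightarrow> coprime (int p) (a*b) \<and> exact_pow2 s (ord_ratio p a b)"
  thus "\<exists>q. odd q \<and> int d dvd a^(2^(s-1)*q) + b^(2^(s-1)*q)"
    using conv_all[OF assms(4)] assms(2,3) by blast
qed

context
  fixes a b :: int and \<gamma> :: nat
  assumes ab: "coprime a b" and oa: "odd a" and ob: "odd b"
    and g0: "\<gamma> > 0" and ex: "exact_pow2 \<gamma> (a + b)"
begin

lemma vodd: "odd k \<Longrightarrow> exact_pow2 \<gamma> (a^k + b^k)"
  using sum_pow_odd[of k a b] exact_pow2_mul_odd[OF ex odd_cofactor[of k a b]] oa ob by simp

lemma veven: "even k \<Longrightarrow> exact_pow2 1 (a^k + b^k)"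
  using even_exact1[OF oa ob] by blast

lemma two_dvd: "2 dvd a^k + b^k"
proof (cases "even k")
  case True thus ?thesis using veven[OF True] by (simp add: exact_pow2_def)
next
  case False
  hence "2^\<gamma> dvd a^k + b^k" using vodd by (simp add: exact_pow2_def)
  thus ?thesis using g0 by (meson dvd_power dvd_trans)
qed

lemma G_mem: "d \<in> G a b \<beta> \<longleftrightarrow> d > 0 \<and> (\<exists>k>0. 2^\<beta> * int d dvd a^k + b^k)"
  by (simp add: G_def)

definition OS where "OS = {d::nat. d > 0 \<and> odd d \<and> (\<exists>k. odd k \<and> int d dvd a^k + b^k)}"

lemma GB:
  assumes "2 \<le> \<beta>" "\<beta> \<le> \<gamma>"
  shows "G a b \<beta> = {d * 2^i | d i. i \<le> \<gamma> - \<beta> \<and> d \<in> OS}"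
proof (rule Set.set_eqI, rule iffI)
  fix x assume "x \<in> G a b \<beta>"
  then obtain k where x0: "x > 0" and k: "k > 0" "2^\<beta> * int x dvd a^k + b^k" by (auto simp: G_mem)
  obtain i d where xd: "x = 2^i * d" "odd d" using odd_decomp[OF x0] by blast
  have d0: "d > 0" using xd x0 by (simp add: odd_pos)
  have dv: "2^(\<beta>+i) * int d dvd a^k + b^k" using k(2) xd by (simp add: power_add mult.assoc)
  show "x \<in> {d * 2^i | d i. i \<le> \<gamma> - \<beta> \<and> d \<in> OS}"
  proof (cases "even k")
    case True
    hence "\<beta> + i \<le> 1" using exact_dvd_iff[OF veven[OF True] xd(2)] dv by blast
    thus ?thesis using assms by simp
  next
    case False
    hence "\<beta> + i \<le> \<gamma> \<and> int d dvd a^k + b^k" using exact_dvd_iff[OF vodd[OF False] xd(2)] dv by blast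
    hence "i \<le> \<gamma> - \<beta>" "int d dvd a^k + b^k" by auto
    moreover have "d \<in> OS" using xd d0 False \<open>int d dvd a^k + b^k\<close> unfolding OS_def by blast
    moreover have "x = d * 2^i" using xd by simp
    ultimately show ?thesis by blast
  qed
next
  fix x assume "x \<in> {d * 2^i | d i. i \<le> \<gamma> - \<beta> \<and> d \<in> OS}"
  then obtain d i k where x: "x = d * 2^i" "i \<le> \<gamma> - \<beta>" "d > 0" "odd d" "odd k" "int d dvd a^k + b^k"
    unfolding OS_def by blast
  have "2^(\<beta>+i) * int d dvd a^k + b^k" using exact_dvd_iff[OF vodd[OF x(5)] x(4)] x assms by simp
  moreover have "k > 0" using x(5) by (simp add: odd_pos)
  ultimately show "x \<in> G a b \<beta>" using x by (auto simp: G_mem power_add mult_ac)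
qed

lemma G_gamma: "2 \<le> \<gamma> \<Longrightarrow> G a b \<gamma> = OS"
  using GB[of \<gamma>] by auto

lemma OS_char: "OS = {d::nat. d > 0 \<and> (d = 1 \<or> (odd d \<and>
           (\<forall>p. prime p \<and> p dvd d \<longrightarrow>
              coprime (int p) (a * b) \<and> exact_pow2 1 (ord_ratio p a b))))}"
proof (rule Set.set_eqI, rule iffI)
  fix d assume "d \<in> OS"
  thus "d \<in> {d::nat. d > 0 \<and> (d = 1 \<or> (odd d \<and>
           (\<forall>p. prime p \<and> p dvd d \<longrightarrow>
              coprime (int p) (a * b) \<and> exact_pow2 1 (ord_ratio p a b))))}"
    unfolding OS_def using CH[OF ab, of d 1] by auto
next
  fix d assume d: "d \<in> {d::nat. d > 0 \<and> (d = 1 \<or> (odd d \<and>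
           (\<forall>p. prime p \<and> p dvd d \<longrightarrow>
              coprime (int p) (a * b) \<and> exact_pow2 1 (ord_ratio p a b))))}"
  show "d \<in> OS"
  proof (cases "d = 1")
    case True thus ?thesis unfolding OS_def by (auto intro: exI[of _ 1])
  next
    case False thus ?thesis using d CH[OF ab, of d 1] unfolding OS_def by auto
  qed
qed

lemma part1: "\<gamma> < \<beta> \<Longrightarrow> G a b \<beta> = {}"
proof (rule ccontr)
  assume lt: "\<gamma> < \<beta>" and "G a b \<beta> \<noteq> {}"
  then obtain x k where k: "k > 0" "2^\<beta> * int x dvd a^k + b^k" by (auto simp: G_mem)
  hence dv: "2^\<beta> * int 1 dvd a^k + b^k" by (metis dvd_mult_left mult_1_right of_nat_1)
  show False
  proof (cases "even k")
    case True thus False using exact_dvd_iff[OF veven[OF True], of 1] dv lt g0 by simp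
  next
    case False thus False using exact_dvd_iff[OF vodd[OF False], of 1] dv lt by simp
  qed
qed


lemma G1:
  "G a b 1 = (\<lambda>d. 2*d) ` G a b 2 \<union> {d. d > 0 \<and> odd d \<and> (\<exists>k>0. int d dvd a^k + b^k)}"
proof (rule Set.set_eqI, rule iffI)
  fix x assume "x \<in> G a b 1"
  then obtain k where x0: "x > 0" and k: "k > 0" "2 * int x dvd a^k + b^k" by (auto simp: G_mem)
  show "x \<in> (\<lambda>d. 2*d) ` G a b 2 \<union> {d. d > 0 \<and> odd d \<and> (\<exists>k>0. int d dvd a^k + b^k)}"
  proof (cases "even x")
    case True
    then obtain y where y: "x = 2*y" by blast
    hence "y > 0" "2^2 * int y dvd a^k + b^k" using x0 k by (auto simp: mult.assoc)
    hence "y \<in> G a b 2" using k(1) by (auto simp: G_mem)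
    thus ?thesis using y by blast
  next
    case False
    hence "int x dvd a^k + b^k" using k(2) dvd_mult_right by blast
    thus ?thesis using False x0 k(1) by blast
  qed
next
  fix x assume "x \<in> (\<lambda>d. 2*d) ` G a b 2 \<union> {d. d > 0 \<and> odd d \<and> (\<exists>k>0. int d dvd a^k + b^k)}"
  thus "x \<in> G a b 1"
  proof
    assume "x \<in> (\<lambda>d. 2*d) ` G a b 2"
    then obtain y k where "x = 2*y" "y > 0" "k > 0" "2^2 * int y dvd a^k + b^k" by (auto simp: G_mem)
    thus ?thesis by (auto simp: G_mem mult.assoc)
  next
    assume "x \<in> {d. d > 0 \<and> odd d \<and> (\<exists>k>0. int d dvd a^k + b^k)}"
    then obtain k where x: "x > 0" "odd x" "k > 0" "int x dvd a^k + b^k" by blast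
    have "coprime (2::int) (int x)" using x(2) by simp
    hence "2 * int x dvd a^k + b^k" using two_dvd x(4) by (simp add: divides_mult)
    thus ?thesis using x by (auto simp: G_mem)
  qed
qed

lemma S_char:
  "{d. d > 0 \<and> odd d \<and> (\<exists>k>0. int d dvd a^k + b^k)} =
   {d::nat. d > 0 \<and> (d = 1 \<or> (odd d \<and> (\<exists>s::nat. s \<ge> 1 \<and>
             (\<forall>p. prime p \<and> p dvd d \<longrightarrow>
                coprime (int p) (a * b) \<and> exact_pow2 s (ord_ratio p a b)))))}"
proof (rule Set.set_eqI, rule iffI)
  fix d assume "d \<in> {d. d > 0 \<and> odd d \<and> (\<exists>k>0. int d dvd a^k + b^k)}"
  then obtain k where d: "d > 0" "odd d" "k > 0" "int d dvd a^k + b^k" by blast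
  obtain i q where kq: "k = 2^i * q" "odd q" using odd_decomp[OF d(3)] by blast
  have "\<exists>q. odd q \<and> int d dvd a^(2^(i+1-1)*q) + b^(2^(i+1-1)*q)" using kq d(4) by auto
  hence "\<forall>p. prime p \<and> p dvd d \<longrightarrow> coprime (int p) (a * b) \<and> exact_pow2 (i+1) (ord_ratio p a b)"
    using CH[OF ab d(2,1), of "i+1"] by simp
  thus "d \<in> {d::nat. d > 0 \<and> (d = 1 \<or> (odd d \<and> (\<exists>s::nat. s \<ge> 1 \<and>
             (\<forall>p. prime p \<and> p dvd d \<longrightarrow>
                coprime (int p) (a * b) \<and> exact_pow2 s (ord_ratio p a b)))))}"
    using d by (auto intro!: exI[of _ "i+1"])
next
  fix d assume d: "d \<in> {d::nat. d > 0 \<and> (d = 1 \<or> (odd d \<and> (\<exists>s::nat. s \<ge> 1 \<and>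
             (\<forall>p. prime p \<and> p dvd d \<longrightarrow>
                coprime (int p) (a * b) \<and> exact_pow2 s (ord_ratio p a b)))))}"
  show "d \<in> {d. d > 0 \<and> odd d \<and> (\<exists>k>0. int d dvd a^k + b^k)}"
  proof (cases "d = 1")
    case True thus ?thesis by (auto intro!: exI[of _ 1])
  next
    case False
    then obtain s where s: "d > 0" "odd d" "s \<ge> 1" "\<forall>p. prime p \<and> p dvd d \<longrightarrow>
                coprime (int p) (a * b) \<and> exact_pow2 s (ord_ratio p a b)" using d by blast
    then obtain q where q: "odd q" "int d dvd a^(2^(s-1)*q) + b^(2^(s-1)*q)"
      using CH[OF ab s(2,1,3)] by blast
    have "2^(s-1)*q > 0" using q(1) by (simp add: odd_pos)
    thus ?thesis using q s by blast
  qed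
qed

lemma G0: "G a b 0 = G a b 1 \<union> (\<lambda>d. 2 * d) ` G a b 1"
proof (rule Set.set_eqI, rule iffI)
  fix x assume "x \<in> G a b 0"
  then obtain k where x0: "x > 0" and k: "k > 0" "int x dvd a^k + b^k" by (auto simp: G_mem)
  show "x \<in> G a b 1 \<union> (\<lambda>d. 2 * d) ` G a b 1"
  proof (cases "even x")
    case True
    then obtain y where y: "x = 2*y" by blast
    hence "y > 0" "2^1 * int y dvd a^k + b^k" using x0 k by auto
    hence "y \<in> G a b 1" using k(1) by (auto simp: G_mem)
    thus ?thesis using y by blast
  next
    case False
    have "coprime (2::int) (int x)" using False by simp
    hence "2^1 * int x dvd a^k + b^k" using two_dvd k(2) by (simp add: divides_mult)
    thus ?thesis using x0 k(1) by (auto simp: G_mem)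
  qed
next
  fix x assume "x \<in> G a b 1 \<union> (\<lambda>d. 2 * d) ` G a b 1"
  thus "x \<in> G a b 0"
  proof
    assume "x \<in> G a b 1"
    then obtain k where "x > 0" "k > 0" "2 * int x dvd a^k + b^k" by (auto simp: G_mem)
    thus ?thesis by (auto simp: G_mem dest: dvd_mult_right)
  next
    assume "x \<in> (\<lambda>d. 2 * d) ` G a b 1"
    then obtain y k where "x = 2*y" "y > 0" "k > 0" "2 * int y dvd a^k + b^k" by (auto simp: G_mem)
    thus ?thesis by (auto simp: G_mem)
  qed
qed

lemma part3:
  assumes "2 \<le> \<beta>" "\<beta> < \<gamma>"
  shows "G a b \<beta> = (\<Union>i\<in>{0..\<gamma> - \<beta>}. (\<lambda>d. d * 2 ^ i) ` G a b \<gamma>)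
      \<and> G a b \<beta> = G a b (\<beta> + 1) \<union> (\<lambda>d. d * 2 ^ (\<gamma> - \<beta>)) ` G a b \<gamma>"
proof -
  have gg: "G a b \<gamma> = OS" using G_gamma assms by simp
  have b1: "G a b \<beta> = {d * 2^i | d i. i \<le> \<gamma> - \<beta> \<and> d \<in> OS}" using GB assms by simp
  have b2: "G a b (\<beta>+1) = {d * 2^i | d i. i \<le> \<gamma> - (\<beta>+1) \<and> d \<in> OS}" using GB assms by simp
  have "G a b \<beta> = (\<Union>i\<in>{0..\<gamma> - \<beta>}. (\<lambda>d. d * 2 ^ i) ` G a b \<gamma>)"
    unfolding b1 gg
  proof (rule Set.set_eqI, rule iffI)
    fix x assume "x \<in> {d * 2^i | d i. i \<le> \<gamma> - \<beta> \<and> d \<in> OS}"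
    then obtain d i where "x = d*2^i" "i \<le> \<gamma> - \<beta>" "d \<in> OS" by blast
    thus "x \<in> (\<Union>i\<in>{0..\<gamma> - \<beta>}. (\<lambda>d. d * 2 ^ i) ` OS)" by auto
  next
    fix x assume "x \<in> (\<Union>i\<in>{0..\<gamma> - \<beta>}. (\<lambda>d. d * 2 ^ i) ` OS)"
    then obtain d i where "x = d*2^i" "i \<le> \<gamma> - \<beta>" "d \<in> OS" by auto
    thus "x \<in> {d * 2^i | d i. i \<le> \<gamma> - \<beta> \<and> d \<in> OS}" by blast
  qed
  moreover have "G a b \<beta> = G a b (\<beta> + 1) \<union> (\<lambda>d. d * 2 ^ (\<gamma> - \<beta>)) ` G a b \<gamma>"
    unfolding b1 b2 gg
  proof (rule Set.set_eqI, rule iffI)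
    fix x assume "x \<in> {d * 2^i | d i. i \<le> \<gamma> - \<beta> \<and> d \<in> OS}"
    then obtain d i where x: "x = d*2^i" "i \<le> \<gamma> - \<beta>" "d \<in> OS" by blast
    show "x \<in> {d * 2^i | d i. i \<le> \<gamma> - (\<beta>+1) \<and> d \<in> OS} \<union> (\<lambda>d. d * 2 ^ (\<gamma> - \<beta>)) ` OS"
    proof (cases "i = \<gamma> - \<beta>")
      case True thus ?thesis using x by blast
    next
      case False hence "i \<le> \<gamma> - (\<beta>+1)" using x(2) by simp
      thus ?thesis using x by blast
    qed
  next
    fix x assume x: "x \<in> {d * 2^i | d i. i \<le> \<gamma> - (\<beta>+1) \<and> d \<in> OS} \<union> (\<lambda>d. d * 2 ^ (\<gamma> - \<beta>)) ` OS"
    show "x \<in> {d * 2^i | d i. i \<le> \<gamma> - \<beta> \<and> d \<in> OS}"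
    proof (cases "x \<in> (\<lambda>d. d * 2 ^ (\<gamma> - \<beta>)) ` OS")
      case True thus ?thesis by blast
    next
      case False
      then obtain d i where "x = d*2^i" "i \<le> \<gamma> - (\<beta>+1)" "d \<in> OS" using x by blast
      moreover have "i \<le> \<gamma> - \<beta>" using calculation(2) by simp
      ultimately show ?thesis by blast
    qed
  qed
  ultimately show ?thesis by blast
qed


lemma part2: "2 \<le> \<gamma> \<Longrightarrow> G a b \<gamma> = {d::nat. d > 0 \<and> (d = 1 \<or> (odd d \<and>
           (\<forall>p. prime p \<and> p dvd d \<longrightarrow>
              coprime (int p) (a * b) \<and> exact_pow2 1 (ord_ratio p a b))))}"
  using G_gamma OS_char by simp

end



theorem theorem2p15:
  fixes a b :: int and \<beta> \<gamma> :: nat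
  assumes "coprime a b" and "odd a" and "odd b"
    and "\<gamma> > 0" and "exact_pow2 \<gamma> (a + b)"
  shows
    "(\<gamma> < \<beta> \<longrightarrow> G a b \<beta> = {})
   \<and> (2 \<le> \<beta> \<and> \<beta> \<le> \<gamma> \<longrightarrow>
        G a b \<gamma> = {d::nat. d > 0 \<and> (d = 1 \<or> (odd d \<and>
           (\<forall>p. prime p \<and> p dvd d \<longrightarrow>
              coprime (int p) (a * b) \<and> exact_pow2 1 (ord_ratio p a b))))})
   \<and> (2 \<le> \<beta> \<and> \<beta> < \<gamma> \<longrightarrow>
        G a b \<beta> = (\<Union>i\<in>{0..\<gamma> - \<beta>}. (\<lambda>d. d * 2 ^ i) ` G a b \<gamma>)
      \<and> G a b \<beta> = G a b (\<beta> + 1) \<union> (\<lambda>d. d * 2 ^ (\<gamma> - \<beta>)) ` G a b \<gamma>)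
   \<and> (\<beta> \<in> {0, 1} \<longrightarrow>
        G a b 1 = (\<lambda>d. 2 * d) ` G a b 2 \<union>
          {d::nat. d > 0 \<and> (d = 1 \<or> (odd d \<and> (\<exists>s::nat. s \<ge> 1 \<and>
             (\<forall>p. prime p \<and> p dvd d \<longrightarrow>
                coprime (int p) (a * b) \<and> exact_pow2 s (ord_ratio p a b)))))}
      \<and> G a b 0 = G a b 1 \<union> (\<lambda>d. 2 * d) ` G a b 1)"
proof -
  have 1: "\<gamma> < \<beta> \<longrightarrow> G a b \<beta> = {}" using part1[OF assms] by blast
  have 2: "2 \<le> \<beta> \<and> \<beta> \<le> \<gamma> \<longrightarrow> G a b \<gamma> = {d::nat. d > 0 \<and> (d = 1 \<or> (odd d \<and>
           (\<forall>p. prime p \<and> p dvd d \<longrightarrow>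
              coprime (int p) (a * b) \<and> exact_pow2 1 (ord_ratio p a b))))}"
    using part2[OF assms] by simp
  have 3: "2 \<le> \<beta> \<and> \<beta> < \<gamma> \<longrightarrow> G a b \<beta> = (\<Union>i\<in>{0..\<gamma> - \<beta>}. (\<lambda>d. d * 2 ^ i) ` G a b \<gamma>)
      \<and> G a b \<beta> = G a b (\<beta> + 1) \<union> (\<lambda>d. d * 2 ^ (\<gamma> - \<beta>)) ` G a b \<gamma>"
    using part3[OF assms] by blast
  have 4: "G a b 1 = (\<lambda>d. 2 * d) ` G a b 2 \<union>
          {d::nat. d > 0 \<and> (d = 1 \<or> (odd d \<and> (\<exists>s::nat. s \<ge> 1 \<and>
             (\<forall>p. prime p \<and> p dvd d \<longrightarrow>
                coprime (int p) (a * b) \<and> exact_pow2 s (ord_ratio p a b)))))}"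
    using G1[OF assms] S_char[OF assms] by simp
  have 5: "G a b 0 = G a b 1 \<union> (\<lambda>d. 2 * d) ` G a b 1" using G0[OF assms] .
  show ?thesis using 1 2 3 4 5 by blast
qed

end
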